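(* Let $V$ be a real sequence and suppose that for some real $a$ with $|a|>1$, the equation $(-\Delta+V)\psi=0$ has a solution $\psi^-$ with $a^n\psi^-_n\to1$ as $n\to\infty$. Then: (i) every solution $\psi$ that is linearly independent of $\psi^-$ is exponentially increasing, in the sense that $a^{-n}\psi_n\to C\neq0$ as $n\to\infty$; (ii) for any solution $\psi$, the product $\psi_n\psi^-_n$ is bounded independently of $n$; (iii) given any boundary condition of the form $c\psi_1+d\psi_2=0$, if $0\notin\mathrm{sp}(-\Delta+V)$, then the Green matrix of $-\Delta+V$ on $n\ge1$ is uniformly bounded.
   Context: $(\Delta f)_n=f_{n+1}+f_{n-1}-2f_n$; $(-\Delta+V)\psi=0$ means $-\psi_{n+1}-\psi_{n-1}+(2+V_n)\psi_n=0$ for $n\ge1$. The Green matrix of $-\Delta+V$ on $n\ge1$ with the given boundary condition is $G_{mn}=\psi^+_{\min(m,n)}\psi^-_{\max(m,n)}/W[\psi^-,\psi^+]$, where $\psi^+$ is a solution satisfying the boundary condition and $W[\psi^-,\psi^+]=\psi^-_n\psi^+_{n+1}-\psi^-_{n+1}\psi^+_n$. *)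

theory Defs
  imports Complex_Main
begin

definition schr :: "(nat \<Rightarrow> real) \<Rightarrow> (nat \<Rightarrow> real) \<Rightarrow> nat \<Rightarrow> real" where
  "schr V f n = - f (n + 1) - f (n - 1) + (2 + V n) * f n"

definition is_sol :: "(nat \<Rightarrow> real) \<Rightarrow> (nat \<Rightarrow> real) \<Rightarrow> bool" where
  "is_sol V psi \<longleftrightarrow> (\<forall>n\<ge>1. schr V psi n = 0)"

definition lin_indep :: "(nat \<Rightarrow> real) \<Rightarrow> (nat \<Rightarrow> real) \<Rightarrow> bool" where
  "lin_indep f g \<longleftrightarrow> (\<forall>\<alpha> \<beta>. (\<forall>n. \<alpha> * f n + \<beta> * g n = 0) \<longrightarrow> \<alpha> = 0 \<and> \<beta> = 0)"

definition wronskian :: "(nat \<Rightarrow> real) \<Rightarrow> (nat \<Rightarrow> real) \<Rightarrow> nat \<Rightarrow> real" where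
  "wronskian f g n = f n * g (n + 1) - f (n + 1) * g n"

definition green :: "(nat \<Rightarrow> real) \<Rightarrow> (nat \<Rightarrow> real) \<Rightarrow> nat \<Rightarrow> nat \<Rightarrow> real" where
  "green psip psim m n = psip (min m n) * psim (max m n) / wronskian psim psip 1"

text \<open>l^2 on the half line n >= 1 (the value at index 0 is ignored).\<close>
definition l2 :: "(nat \<Rightarrow> real) \<Rightarrow> bool" where
  "l2 f \<longleftrightarrow> summable (\<lambda>n. (f (Suc n))\<^sup>2)"

definition l2norm :: "(nat \<Rightarrow> real) \<Rightarrow> real" where
  "l2norm f = sqrt (\<Sum>n. (f (Suc n))\<^sup>2)"

text \<open>Domain of the half-line operator -Delta+V on n >= 1 with boundary condition
  c psi_1 + d psi_2 = 0, realised via the ghost value f 0: for solutions of the equation at n = 1,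
  c psi_1 + d psi_2 = 0 is equivalent to d psi_0 = (c + d (2 + V_1)) psi_1.\<close>
definition op_dom :: "(nat \<Rightarrow> real) \<Rightarrow> real \<Rightarrow> real \<Rightarrow> (nat \<Rightarrow> real) \<Rightarrow> bool" where
  "op_dom V c d f \<longleftrightarrow> l2 f \<and> l2 (schr V f) \<and> d * f 0 = (c + d * (2 + V 1)) * f 1"

definition spectrum_op :: "(nat \<Rightarrow> real) \<Rightarrow> real \<Rightarrow> real \<Rightarrow> real set" where
  "spectrum_op V c d = {z. \<not> (
      (\<forall>g. l2 g \<longrightarrow> (\<exists>!f. op_dom V c d f \<and> (\<forall>n\<ge>1. schr V f n - z * f n = g n))) \<and>
      (\<exists>K. \<forall>f. op_dom V c d f \<longrightarrow> l2norm f \<le> K * l2norm (\<lambda>n. schr V f n - z * f n)))}"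

end

theory Submission
  imports Defs
begin

lemma contr_aux:
  fixes e eps r :: "nat \<Rightarrow> real"
  assumes rec: "\<forall>n\<ge>N. e (Suc n) = eps n + r n * e n"
  and rb: "\<forall>n\<ge>N. \<bar>r n\<bar> \<le> \<rho>" and epsb: "\<forall>n\<ge>N. \<bar>eps n\<bar> \<le> \<delta> * (1-\<rho>)"
  and r0: "0 \<le> \<rho>"
  shows "max (\<bar>e (N+k)\<bar> - \<delta>) 0 \<le> \<rho>^k * max (\<bar>e N\<bar> - \<delta>) 0"
proof (induction k)
  case 0 then show ?case by simp
next
  case (Suc k)
  let ?n = "N+k"
  have "\<bar>e (Suc ?n)\<bar> \<le> \<bar>eps ?n\<bar> + \<bar>r ?n\<bar> * \<bar>e ?n\<bar>"
    using rec by (simp add: abs_mult) (metis abs_mult abs_triangle_ineq)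
  also have "\<dots> \<le> \<delta> * (1-\<rho>) + \<rho> * \<bar>e ?n\<bar>"
    using rb epsb by (intro add_mono mult_right_mono) auto
  finally have 1: "\<bar>e (Suc ?n)\<bar> - \<delta> \<le> \<rho> * (\<bar>e ?n\<bar> - \<delta>)" by (simp add: algebra_simps)
  have "\<rho> * (\<bar>e ?n\<bar> - \<delta>) \<le> \<rho> * max (\<bar>e ?n\<bar> - \<delta>) 0" using r0 by (intro mult_left_mono) auto
  also have "\<dots> \<le> \<rho> * (\<rho>^k * max (\<bar>e N\<bar> - \<delta>) 0)" using Suc r0 by (intro mult_left_mono) auto
  finally have 2: "\<bar>e (Suc ?n)\<bar> - \<delta> \<le> \<rho>^Suc k * max (\<bar>e N\<bar> - \<delta>) 0" using 1 by simp
  have 3: "0 \<le> \<rho>^Suc k * max (\<bar>e N\<bar> - \<delta>) 0" using r0 by simp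
  show ?case using 2 3 by simp
qed

lemma contr:
  fixes x b r :: "nat \<Rightarrow> real"
  assumes ev: "eventually (\<lambda>n. x (Suc n) = b n + r n * x n) sequentially"
    and bB: "b \<longlonglongrightarrow> B" and rR: "r \<longlonglongrightarrow> R" and R1: "\<bar>R\<bar> < 1"
  shows "x \<longlonglongrightarrow> B / (1 - R)"
proof -
  define L where "L = B / (1 - R)"
  have LL: "L = B + R * L" using R1 unfolding L_def by (simp add: field_simps)
  define e where "e n = x n - L" for n
  define eps where "eps n = (b n - B) + (r n - R) * L" for n
  have epsz: "eps \<longlonglongrightarrow> 0"
  proof -
    have "(\<lambda>n. (b n - B) + (r n - R) * L) \<longlonglongrightarrow> (B - B) + (R - R) * L"
      by (intro tendsto_intros bB rR)
    then show ?thesis unfolding eps_def by simp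
  qed
  obtain N1 where N1: "\<forall>n\<ge>N1. x (Suc n) = b n + r n * x n" using ev by (auto simp: eventually_sequentially)
  have erec: "e (Suc n) = eps n + r n * e n" if "n \<ge> N1" for n
    using N1 that unfolding e_def eps_def by (subst LL) (auto simp: algebra_simps)
  define \<rho> where "\<rho> = (1 + \<bar>R\<bar>) / 2"
  have r0: "0 \<le> \<rho>" and r1: "\<rho> < 1" and rR': "\<bar>R\<bar> < \<rho>" using R1 unfolding \<rho>_def by auto
  obtain N2 where N2: "\<forall>n\<ge>N2. \<bar>r n - R\<bar> < \<rho> - \<bar>R\<bar>"
    using rR rR' unfolding LIMSEQ_iff by (metis diff_gt_0_iff_gt real_norm_def)
  have rb: "\<bar>r n\<bar> \<le> \<rho>" if "n \<ge> N2" for n using N2 that by force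
  have "e \<longlonglongrightarrow> 0"
    unfolding LIMSEQ_iff
  proof (intro allI impI)
    fix \<epsilon> :: real assume ep: "\<epsilon> > 0"
    define \<delta> where "\<delta> = \<epsilon> / 2"
    have d0: "\<delta> > 0" using ep unfolding \<delta>_def by simp
    have "\<delta> * (1 - \<rho>) > 0" using d0 r1 by simp
    then obtain N3 where N3: "\<forall>n\<ge>N3. \<bar>eps n\<bar> < \<delta> * (1 - \<rho>)"
      using epsz unfolding LIMSEQ_iff by (metis diff_zero real_norm_def)
    define N where "N = max N1 (max N2 N3)"
    have NN: "N1 \<le> N" "N2 \<le> N" "N3 \<le> N" unfolding N_def by simp_all
    define M where "M = max (\<bar>e N\<bar> - \<delta>) 0"
    have aux: "max (\<bar>e (N+k)\<bar> - \<delta>) 0 \<le> \<rho>^k * M" for k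
      unfolding M_def
    proof (rule contr_aux[where eps=eps and r=r, OF _ _ _ r0])
      show "\<forall>n\<ge>N. e (Suc n) = eps n + r n * e n" proof (intro allI impI)
        fix n assume "N \<le> n" then have "N1 \<le> n" using NN by linarith
        then show "e (Suc n) = eps n + r n * e n" by (rule erec)
      qed
      show "\<forall>n\<ge>N. \<bar>r n\<bar> \<le> \<rho>" proof (intro allI impI)
        fix n assume "N \<le> n" then have "N2 \<le> n" using NN by linarith
        then show "\<bar>r n\<bar> \<le> \<rho>" by (rule rb)
      qed
      show "\<forall>n\<ge>N. \<bar>eps n\<bar> \<le> \<delta> * (1 - \<rho>)" proof (intro allI impI)
        fix n assume "N \<le> n" then have "N3 \<le> n" using NN by linarith
        then show "\<bar>eps n\<bar> \<le> \<delta> * (1 - \<rho>)" using N3 less_imp_le by blast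
      qed
    qed
    have "(\<lambda>k. \<rho>^k * M) \<longlonglongrightarrow> 0 * M"
      by (intro tendsto_intros LIMSEQ_power_zero) (use r0 r1 in auto)
    then obtain K where K: "\<forall>k\<ge>K. \<bar>\<rho>^k * M\<bar> < \<delta>"
      using d0 unfolding LIMSEQ_iff by (metis diff_zero mult_zero_left real_norm_def)
    show "\<exists>no. \<forall>n\<ge>no. norm (e n - 0) < \<epsilon>"
    proof (intro exI allI impI)
      fix n assume "n \<ge> N + K"
      then have "n = N + (n - N) \<and> n - N \<ge> K" by linarith
      then obtain k where k: "n = N + k" "k \<ge> K" by blast
      have "\<bar>e n\<bar> - \<delta> \<le> \<rho>^k * M" using aux[of k] k by simp
      also have "\<dots> < \<delta>" using K k by force
      finally show "norm (e n - 0) < \<epsilon>" unfolding \<delta>_def by simp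
    qed
  qed
  then have "(\<lambda>n. e n + L) \<longlonglongrightarrow> 0 + L" by (intro tendsto_intros)
  then show ?thesis unfolding e_def L_def by simp
qed

lemma wr_const:
  assumes f: "is_sol V f" and g: "is_sol V g"
  shows "wronskian f g n = wronskian f g 0"
proof (induction n)
  case 0 then show ?case by simp
next
  case (Suc n)
  have ef: "f (Suc (Suc n)) = (2 + V (Suc n)) * f (Suc n) - f n"
    using f unfolding is_sol_def schr_def by (drule_tac x="Suc n" in spec) simp
  have eg: "g (Suc (Suc n)) = (2 + V (Suc n)) * g (Suc n) - g n"
    using g unfolding is_sol_def schr_def by (drule_tac x="Suc n" in spec) simp
  have "wronskian f g (Suc n) = wronskian f g n"
    unfolding wronskian_def by (simp add: ef eg algebra_simps)
  then show ?case using Suc by simp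
qed


lemma sol_zero:
  assumes f: "is_sol V f" and "f 0 = 0" "f 1 = 0"
  shows "f n = 0"
proof -
  have "f n = 0 \<and> f (Suc n) = 0" for n
  proof (induction n)
    case 0 then show ?case using assms by simp
  next
    case (Suc n)
    have ef: "f (Suc (Suc n)) = (2 + V (Suc n)) * f (Suc n) - f n"
      using f unfolding is_sol_def schr_def by (drule_tac x="Suc n" in spec) simp
    then show ?case using Suc by simp
  qed
  then show ?thesis by simp
qed

lemma sol_lin:
  assumes "is_sol V f" "is_sol V g"
  shows "is_sol V (\<lambda>n. \<alpha> * f n + \<beta> * g n)"
  unfolding is_sol_def
proof (intro allI impI)
  fix n :: nat assume "n \<ge> 1"
  then have "schr V f n = 0" "schr V g n = 0" using assms unfolding is_sol_def by auto
  then show "schr V (\<lambda>n. \<alpha> * f n + \<beta> * g n) n = 0"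
  proof -
    have "schr V (\<lambda>n. \<alpha> * f n + \<beta> * g n) n = \<alpha> * schr V f n + \<beta> * schr V g n"
      unfolding schr_def by (simp add: algebra_simps)
    then show ?thesis using \<open>schr V f n = 0\<close> \<open>schr V g n = 0\<close> by simp
  qed
qed

lemma q_lim:
  fixes V psim psi :: "nat \<Rightarrow> real" and a :: real
  assumes a1: "\<bar>a\<bar> > 1" and sm: "is_sol V psim" and s: "is_sol V psi"
    and pl: "(\<lambda>n. a ^ n * psim n) \<longlonglongrightarrow> 1"
  shows "(\<lambda>n. psi n / a ^ n) \<longlonglongrightarrow> (wronskian psim psi 0 / a) / (1 - 1 / a^2)"
proof -
  define W where "W = wronskian psim psi 0"
  define p where "p n = a ^ n * psim n" for n
  define q where "q n = psi n / a ^ n" for n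
  have a0: "a \<noteq> 0" using a1 by auto
  have a2: "a^2 > 1" using a1 by (metis abs_of_nonneg abs_ge_zero one_less_power pos2 power2_abs)
  have pl': "p \<longlonglongrightarrow> 1" using pl unfolding p_def by simp
  have evp: "eventually (\<lambda>n. p n > 1/2) sequentially"
    using order_tendstoD(1)[OF pl', of "1/2"] by simp
  have rec: "eventually (\<lambda>n. q (Suc n) = W / (a * p n) + (p (Suc n) / (a^2 * p n)) * q n) sequentially"
    using evp
  proof (rule eventually_mono)
    fix n assume "p n > 1/2"
    then have pn: "p n \<noteq> 0" by simp
    have Wn: "W = psim n * psi (Suc n) - psim (Suc n) * psi n"
      using wr_const[OF sm s, of n] unfolding W_def wronskian_def by simp
    have an: "a ^ n \<noteq> 0" using a0 by simp
    have psimn: "psim n = p n / a ^ n" using an unfolding p_def by simp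
    have psimn1: "psim (Suc n) = p (Suc n) / a ^ Suc n" using an a0 unfolding p_def by simp
    have psin: "psi n = q n * a ^ n" and psin1: "psi (Suc n) = q (Suc n) * a ^ Suc n"
      using an a0 unfolding q_def by simp_all
    have "W = a * p n * q (Suc n) - p (Suc n) * q n / a"
      using Wn unfolding psimn psimn1 psin psin1 using an a0 by (simp add: field_simps)
    then show "q (Suc n) = W / (a * p n) + (p (Suc n) / (a^2 * p n)) * q n"
      using pn a0 by (simp add: field_simps power2_eq_square)
  qed
  have bl: "(\<lambda>n. W / (a * p n)) \<longlonglongrightarrow> W / (a * 1)"
    using a0 by (intro tendsto_intros pl') auto
  have rl: "(\<lambda>n. p (Suc n) / (a^2 * p n)) \<longlonglongrightarrow> 1 / (a^2 * 1)"
    using a0 by (intro tendsto_intros pl' LIMSEQ_Suc) auto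
  have R1: "\<bar>1 / (a^2 * 1)\<bar> < 1" using a2 by (simp add: divide_less_eq)
  have "q \<longlonglongrightarrow> (W / (a * 1)) / (1 - 1 / (a^2 * 1))"
    by (rule contr[OF rec bl rl R1])
  then show ?thesis unfolding q_def W_def by simp
qed

lemma lim_nz:
  fixes a W :: real
  assumes "\<bar>a\<bar> > 1" "W \<noteq> 0"
  shows "(W / a) / (1 - 1 / a^2) \<noteq> 0"
proof -
  have a2: "a^2 > 1" using assms by (metis abs_of_nonneg abs_ge_zero one_less_power pos2 power2_abs)
  then have "1 - 1/a^2 \<noteq> 0" by simp
  moreover have "a \<noteq> 0" using assms by auto
  ultimately show ?thesis using assms by simp
qed


lemma resc:
  fixes u v x y :: real
  assumes "u \<noteq> 0" "v \<noteq> 0"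
  shows "x * y = (x / u) * (v * y) * (u / v)"
  using assms by (simp add: field_simps)

theorem corollary1:
  fixes V psim :: "nat \<Rightarrow> real" and a :: real
  assumes "\<bar>a\<bar> > 1"
    and "is_sol V psim"
    and "(\<lambda>n. a ^ n * psim n) \<longlonglongrightarrow> 1"
  shows "(\<forall>psi. is_sol V psi \<and> lin_indep psi psim \<longrightarrow>
            (\<exists>C. C \<noteq> 0 \<and> (\<lambda>n. psi n / a ^ n) \<longlonglongrightarrow> C))
       \<and> (\<forall>psi. is_sol V psi \<longrightarrow> (\<exists>B. \<forall>n. \<bar>psi n * psim n\<bar> \<le> B))
       \<and> (\<forall>c d psip. (c, d) \<noteq> (0, 0) \<and> 0 \<notin> spectrum_op V c d \<and>
            is_sol V psip \<and> psip \<noteq> (\<lambda>n. 0) \<and> c * psip 1 + d * psip 2 = 0 \<longrightarrow>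
            (\<exists>B. \<forall>m n. m \<ge> 1 \<and> n \<ge> 1 \<longrightarrow> \<bar>green psip psim m n\<bar> \<le> B))"
proof -
  note a1 = assms(1) and sm = assms(2) and pl = assms(3)
  have a0: "a \<noteq> 0" using a1 by auto
  obtain Kp where Kp: "\<forall>n. \<bar>a ^ n * psim n\<bar> \<le> Kp"
    using convergent_imp_Bseq[of "\<lambda>n. a ^ n * psim n"] pl
    by (metis BseqE convergentI real_norm_def)
  have Kp0: "0 \<le> Kp" using Kp[rule_format, of 0] abs_ge_zero[of "a ^ 0 * psim 0"] by linarith
  have qb: "\<exists>K. \<forall>n. \<bar>psi n / a ^ n\<bar> \<le> K" if "is_sol V psi" for psi
    using convergent_imp_Bseq[of "\<lambda>n. psi n / a ^ n"] q_lim[OF a1 sm that pl]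
    by (metis BseqE convergentI real_norm_def)
  have psim_nz: "\<not> (psim 0 = 0 \<and> psim 1 = 0)"
  proof
    assume "psim 0 = 0 \<and> psim 1 = 0"
    then have "\<forall>n. psim n = 0" using sol_zero[OF sm] by blast
    then have "(\<lambda>n. a ^ n * psim n) = (\<lambda>n. 0)" by simp
    then have "(\<lambda>n::nat. 0::real) \<longlonglongrightarrow> 1" using pl by simp
    then show False using LIMSEQ_unique[OF tendsto_const] by force
  qed
  have P1: "\<exists>C. C \<noteq> 0 \<and> (\<lambda>n. psi n / a ^ n) \<longlonglongrightarrow> C"
    if s: "is_sol V psi" and li: "lin_indep psi psim" for psi
  proof -
    have "wronskian psim psi 0 \<noteq> 0"
    proof
      assume W0: "wronskian psim psi 0 = 0"
      then have W0': "psim 0 * psi 1 = psim 1 * psi 0" unfolding wronskian_def by simp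
      have comb: "\<alpha> = 0 \<and> \<beta> = 0" if "\<alpha> * psi 0 + \<beta> * psim 0 = 0" "\<alpha> * psi 1 + \<beta> * psim 1 = 0" for \<alpha> \<beta>
      proof -
        have "\<forall>n. \<alpha> * psi n + \<beta> * psim n = 0"
          using sol_zero[OF sol_lin[OF s sm, of \<alpha> \<beta>]] that by simp
        then show ?thesis using li unfolding lin_indep_def by blast
      qed
      show False
      proof (cases "psim 0 = 0")
        case True
        then have "psim 1 \<noteq> 0" using psim_nz by simp
        have "psim 1 = 0" using comb[of "psim 1" "- psi 1"] W0' by (simp add: algebra_simps)
        then show False using \<open>psim 1 \<noteq> 0\<close> by simp
      next
        case False
        have "psim 0 = 0" using comb[of "psim 0" "- psi 0"] W0' by (simp add: algebra_simps)
        then show False using False by simp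
      qed
    qed
    then show ?thesis using q_lim[OF a1 sm s pl] lim_nz[OF a1] by blast
  qed
  have P2: "\<exists>B. \<forall>n. \<bar>psi n * psim n\<bar> \<le> B" if s: "is_sol V psi" for psi
  proof -
    obtain Kq where Kq: "\<forall>n. \<bar>psi n / a ^ n\<bar> \<le> Kq" using qb[OF s] by blast
    have Kq0: "0 \<le> Kq" using Kq[rule_format, of 0] abs_ge_zero[of "psi 0 / a ^ 0"] by linarith
    have "\<bar>psi n * psim n\<bar> \<le> Kq * Kp" for n
    proof -
      have "psi n * psim n = (psi n / a ^ n) * (a ^ n * psim n)" using a0 by simp
      then have "\<bar>psi n * psim n\<bar> = \<bar>psi n / a ^ n\<bar> * \<bar>a ^ n * psim n\<bar>" by (simp only: abs_mult)
      also have "\<dots> \<le> Kq * Kp" by (rule mult_mono[OF Kq[rule_format] Kp[rule_format] Kq0 abs_ge_zero])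
      finally show ?thesis .
    qed
    then show ?thesis by blast
  qed
  have P3: "\<exists>B. \<forall>m n. m \<ge> 1 \<and> n \<ge> 1 \<longrightarrow> \<bar>green psip psim m n\<bar> \<le> B"
    if s: "is_sol V psip" for psip
  proof -
    obtain Kq where Kq: "\<forall>n. \<bar>psip n / a ^ n\<bar> \<le> Kq" using qb[OF s] by blast
    have Kq0: "0 \<le> Kq" using Kq[rule_format, of 0] abs_ge_zero[of "psip 0 / a ^ 0"] by linarith
    define w where "w = \<bar>wronskian psim psip 1\<bar>"
    have main: "\<bar>psip i * psim j\<bar> \<le> Kq * Kp" if ij: "i \<le> j" for i j
    proof -
      have ai: "a ^ i \<noteq> 0" and aj: "a ^ j \<noteq> 0" using a0 by simp_all
      have "psip i * psim j = (psip i / a ^ i) * (a ^ j * psim j) * (a ^ i / a ^ j)"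
        using resc[OF ai aj] .
      then have "\<bar>psip i * psim j\<bar> = \<bar>psip i / a ^ i\<bar> * \<bar>a ^ j * psim j\<bar> * \<bar>a ^ i / a ^ j\<bar>"
        by (simp only: abs_mult)
      also have "\<dots> \<le> (Kq * Kp) * 1"
      proof (rule mult_mono)
        show "\<bar>psip i / a ^ i\<bar> * \<bar>a ^ j * psim j\<bar> \<le> Kq * Kp" by (rule mult_mono[OF Kq[rule_format] Kp[rule_format] Kq0 abs_ge_zero])
        have "\<bar>a\<bar> ^ i \<le> \<bar>a\<bar> ^ j" using ij a1 by (intro power_increasing) auto
        moreover have "\<bar>a\<bar> ^ j > 0" using a0 by simp
        ultimately have "\<bar>a\<bar> ^ i / \<bar>a\<bar> ^ j \<le> 1" by (simp add: divide_le_eq_1)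
        then show "\<bar>a ^ i / a ^ j\<bar> \<le> 1" by (simp only: abs_divide power_abs)
        show "0 \<le> Kq * Kp" using Kq0 Kp0 by simp
      qed auto
      finally show ?thesis by simp
    qed
    have "\<bar>green psip psim m n\<bar> \<le> Kq * Kp / w" for m n
    proof -
      have "\<bar>green psip psim m n\<bar> = \<bar>psip (min m n) * psim (max m n)\<bar> / w"
        unfolding green_def w_def by (simp add: abs_divide)
      also have "\<dots> \<le> Kq * Kp / w" unfolding w_def
        by (intro divide_right_mono main) auto
      finally show ?thesis .
    qed
    then show ?thesis by blast
  qed
  show ?thesis
  proof (intro conjI allI impI)
    fix psi assume h: "is_sol V psi \<and> lin_indep psi psim"
    show "\<exists>C. C \<noteq> 0 \<and> (\<lambda>n. psi n / a ^ n) \<longlonglongrightarrow> C"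
      using h by (intro P1) simp_all
  next
    fix psi assume h: "is_sol V psi"
    show "\<exists>B. \<forall>n. \<bar>psi n * psim n\<bar> \<le> B" using h by (rule P2)
  next
    fix c d psip
    assume h: "(c, d) \<noteq> (0, 0) \<and> 0 \<notin> spectrum_op V c d \<and>
            is_sol V psip \<and> psip \<noteq> (\<lambda>n. 0) \<and> c * psip 1 + d * psip 2 = 0"
    then have "is_sol V psip" by (elim conjE)
    then show "\<exists>B. \<forall>m n. m \<ge> 1 \<and> n \<ge> 1 \<longrightarrow> \<bar>green psip psim m n\<bar> \<le> B" by (rule P3)
  qed
qed

end
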